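(* Let $d,H\ge1$, $T_{\max}\ge2$. Consider the model and loss defined in the context, with the unitary context distribution. Let $\theta^*=(\mathtt{A}^*,\mathtt{B}^*,P^* )$ satisfy $\ell(\theta^* )=0$ and set $\mathtt{C}^*=\mathtt{B}^{*\top}\mathtt{A}^*$. Then for every $T\in\{2,\dots,T_{\max}\}$: $P^*_{T-1,t}=0$ for all $t\in\{1,\dots,T-1\}$; $P^*_{T-1,T}\,\mathtt{C}^*_{ii}=1$ for all $i$; and $\mathtt{C}^*_{ij}=0$ for all $i\ne j$. Consequently $H\ge d$, and for every $\lambda$ with unit-modulus coordinates and $e_t=\lambda^{t-1}$, $\mathcal{T}_{\theta^*}(e_{1:T})=(\bar e_{T-1}\odot e_T)\odot e_T$ $(=\lambda^T)$.
   Context: Setting: $\lambda\in\mathbb{C}^d$ has i.i.d. coordinates uniform on the unit circle (unitary context distribution); $s_t=e_t=\lambda^{t-1}$ (coordinatewise powers; $s_1=1_d$, $s_{t+1}=\mathrm{diag}(\lambda)s_t$). Parameters $\theta=(\mathtt{A},\mathtt{B},P)$ with $\mathtt{A},\mathtt{B}\in\mathbb{R}^{H\times d}$ whose rows are $a_h,b_h\in\mathbb{R}^d$, and $P\in\mathbb{R}^{T_{\max}\times T_{\max}}$. Model: $\mathcal{T}_\theta(e_{1:T})=\sum_{h=1}^H\sum_{t=1}^T P_{T-1,t}\langle e_t,\mathrm{diag}(a_h)e_{T-1}\rangle_{\mathbb{C}}\mathrm{diag}(b_h)e_t$, where $\langle x,y\rangle_{\mathbb{C}}=\sum_i x_i\bar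 y_i$. Loss: $\ell(\theta)=\sum_{T=2}^{T_{\max}}\mathbb{E}_\lambda\|\mathcal{T}_\theta(e_{1:T})-s_{T+1}\|^2$ (Hermitian norm). $\odot$ is the coordinatewise product, bar is complex conjugation. *)

theory Defs
  imports "HOL-Probability.Probability"
begin

text \<open>Vectors in C^d are functions nat => complex, coordinates indexed by 0..d-1.
  Matrices A, B (H x d) are nat => nat => real with A h i the i-th coordinate of row a_h
  (h < H, i < d).  P is indexed 1-based: P r c for 1 <= r,c <= T_max.\<close>

definition cinner :: "nat \<Rightarrow> (nat \<Rightarrow> complex) \<Rightarrow> (nat \<Rightarrow> complex) \<Rightarrow> complex" where
  "cinner d x y = (\<Sum>i<d. x i * cnj (y i))"

definition cnorm2 :: "nat \<Rightarrow> (nat \<Rightarrow> complex) \<Rightarrow> real" where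
  "cnorm2 d x = (\<Sum>i<d. (cmod (x i))\<^sup>2)"

definition evec :: "(nat \<Rightarrow> complex) \<Rightarrow> nat \<Rightarrow> nat \<Rightarrow> complex" where
  "evec lam t = (\<lambda>i. lam i ^ (t - 1))"

definition model :: "nat \<Rightarrow> nat \<Rightarrow> (nat \<Rightarrow> nat \<Rightarrow> real) \<Rightarrow> (nat \<Rightarrow> nat \<Rightarrow> real)
    \<Rightarrow> (nat \<Rightarrow> nat \<Rightarrow> real) \<Rightarrow> (nat \<Rightarrow> complex) \<Rightarrow> nat \<Rightarrow> nat \<Rightarrow> complex" where
  "model d H A B P lam T = (\<lambda>i. \<Sum>h<H. \<Sum>t=1..T.
      complex_of_real (P (T - 1) t)
      * cinner d (evec lam t) (\<lambda>j. complex_of_real (A h j) * evec lam (T - 1) j)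
      * (complex_of_real (B h i) * evec lam t i))"

text \<open>Unitary context distribution: lambda_j = exp(i phi_j), phi_j i.i.d. uniform on [0, 2 pi].\<close>
definition torus_measure :: "nat \<Rightarrow> (nat \<Rightarrow> real) measure" where
  "torus_measure d = PiM {..<d} (\<lambda>_. uniform_measure lborel {0..2*pi})"

definition loss :: "nat \<Rightarrow> nat \<Rightarrow> nat \<Rightarrow> (nat \<Rightarrow> nat \<Rightarrow> real) \<Rightarrow> (nat \<Rightarrow> nat \<Rightarrow> real)
    \<Rightarrow> (nat \<Rightarrow> nat \<Rightarrow> real) \<Rightarrow> real" where
  "loss d H Tmax A B P = (\<Sum>T=2..Tmax.
      integral\<^sup>L (torus_measure d) (\<lambda>\<phi>.
        let lam = (\<lambda>j. cis (\<phi> j)) in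
        cnorm2 d (\<lambda>i. model d H A B P lam T i - evec lam (T + 1) i)))"

definition Cmat :: "nat \<Rightarrow> (nat \<Rightarrow> nat \<Rightarrow> real) \<Rightarrow> (nat \<Rightarrow> nat \<Rightarrow> real) \<Rightarrow> nat \<Rightarrow> nat \<Rightarrow> real" where
  "Cmat H A B i j = (\<Sum>h<H. B h i * A h j)"

end

theory Submission
  imports Defs "Jordan_Normal_Form.Determinant"
begin


lemma meas_cis[measurable]: "g \<in> borel_measurable M \<Longrightarrow> (\<lambda>x. cis (g x)) \<in> borel_measurable M"
  by (rule borel_measurable_continuous_on) (auto intro!: continuous_intros)

lemma unif_eq: "uniform_measure lborel {0..2*pi} = density lborel (\<lambda>x. ennreal (indicator {0..2*pi} x / (2*pi)))"
proof -
  have e: "1 / ennreal (2*pi) = ennreal (1/(2*pi))"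
    by (metis divide_ennreal ennreal_1 pi_gt_zero zero_less_mult_iff zero_less_numeral zero_le_one)
  show ?thesis unfolding uniform_measure_def
    by (intro density_cong) (auto simp: indicator_def e)
qed

lemma int_cis_Icc:
  fixes n :: int
  shows "integral\<^sup>L lborel (\<lambda>x. indicator {0..2*pi} x *\<^sub>R cis (of_int n * x)) = (if n = 0 then 2*pi else 0)"
proof (cases "n = 0")
  case True
  have "integral\<^sup>L lborel (\<lambda>x. indicator {0..2*pi} x *\<^sub>R (1::complex)) = complex_of_real (2*pi) - complex_of_real 0"
  proof (rule integral_FTC_atLeastAtMost)
    fix x :: real
    have "((\<lambda>z::complex. z) has_field_derivative 1) (at (of_real x))"
      by (auto intro!: derivative_eq_intros)
    from has_vector_derivative_real_field[OF this]
    show "((\<lambda>x. complex_of_real x) has_vector_derivative 1) (at x within {0..2*pi})" .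
  qed auto
  then show ?thesis using True by simp
next
  case False
  let ?F = "\<lambda>x. cis (of_int n * x) / (\<i> * of_int n)"
  have "integral\<^sup>L lborel (\<lambda>x. indicator {0..2*pi} x *\<^sub>R cis (of_int n * x)) = ?F (2*pi) - ?F 0"
  proof (rule integral_FTC_atLeastAtMost)
    fix x :: real
    let ?G = "\<lambda>z::complex. exp (\<i> * of_int n * z) / (\<i> * of_int n)"
    have "(?G has_field_derivative exp (\<i> * of_int n * of_real x)) (at (of_real x))"
      using False by (auto intro!: derivative_eq_intros simp: field_simps)
    from has_vector_derivative_real_field[OF this, where s="{0..2*pi}"]
    show "(?F has_vector_derivative cis (of_int n * x)) (at x within {0..2*pi})"
      by (simp add: cis_conv_exp mult.assoc)
  qed (auto intro!: continuous_intros)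
  moreover have "cis (of_int n * (2*pi)) = 1"
    by (metis cis_multiple_2pi Ints_of_int mult.commute)
  ultimately show ?thesis using False by simp
qed

lemma int_cis_unif:
  fixes n :: int
  shows "integral\<^sup>L (uniform_measure lborel {0..2*pi}) (\<lambda>x. cis (of_int n * x)) = (if n = 0 then 1 else 0)"
proof -
  have "integral\<^sup>L (uniform_measure lborel {0..2*pi}) (\<lambda>x. cis (of_int n * x))
     = integral\<^sup>L lborel (\<lambda>x. (indicator {0..2*pi} x / (2*pi)) *\<^sub>R cis (of_int n * x))"
    unfolding unif_eq by (rule integral_density) auto
  also have "\<dots> = integral\<^sup>L lborel (\<lambda>x. (1/(2*pi)) *\<^sub>R (indicator {0..2*pi} x *\<^sub>R cis (of_int n * x)))"
    by (simp add: field_simps)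
  also have "\<dots> = (1/(2*pi)) *\<^sub>R integral\<^sup>L lborel (\<lambda>x. indicator {0..2*pi} x *\<^sub>R cis (of_int n * x))"
    by (rule integral_scaleR_right)
  also have "\<dots> = (if n = 0 then 1 else 0)"
    using int_cis_Icc[of n] by (cases "n = 0") (simp_all add: scaleR_conv_of_real)
  finally show ?thesis .
qed

abbreviation "U \<equiv> uniform_measure lborel {0..2*pi}"

lemma U_prob: "prob_space U"
  by (rule prob_space_uniform_measure) auto

lemma torus_fpps: "finite_product_prob_space (\<lambda>_. U) {..<d::nat}"
proof -
  have sf: "sigma_finite_measure U" using U_prob by (rule prob_space_imp_sigma_finite)
  show ?thesis
    by (simp add: finite_product_prob_space_def finite_product_sigma_finite_def product_sigma_finite_def
       product_prob_space_def product_prob_space_axioms_def finite_product_sigma_finite_axioms_def sf U_prob finite_lessThan)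
qed

lemma torus_prob: "prob_space (torus_measure d)"
proof -
  interpret finite_product_prob_space "\<lambda>_. U" "{..<d}" by (rule torus_fpps)
  show ?thesis unfolding torus_measure_def by (rule prob_space_axioms)
qed

definition chi :: "nat \<Rightarrow> (nat \<Rightarrow> int) \<Rightarrow> (nat \<Rightarrow> real) \<Rightarrow> complex" where
  "chi d n \<phi> = cis (\<Sum>k<d. of_int (n k) * \<phi> k)"

lemma cis_sum: "cis (\<Sum>k\<in>A. f k) = (\<Prod>k\<in>A. cis (f k))"
  by (induction A rule: infinite_finite_induct) (auto simp: cis_mult[symmetric])

lemma chi_meas[measurable]: "chi d n \<in> borel_measurable (torus_measure d)"
  unfolding chi_def torus_measure_def
  by (intro meas_cis borel_measurable_sum borel_measurable_times borel_measurable_const measurable_component_singleton) auto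

lemma chi_norm[simp]: "norm (chi d n \<phi>) = 1"
  by (simp add: chi_def)

lemma chi_integrable: "integrable (torus_measure d) (chi d n)"
proof -
  interpret prob_space "torus_measure d" by (rule torus_prob)
  show ?thesis by (rule integrable_const_bound[where B=1]) auto
qed

lemma U_cis_int: "integrable U (\<lambda>y. cis (of_int m * y))"
proof -
  interpret u: prob_space U by (rule U_prob)
  show ?thesis by (rule u.integrable_const_bound[where B=1]) auto
qed

lemma int_chi: "integral\<^sup>L (torus_measure d) (chi d n) = (if \<forall>k<d. n k = 0 then 1 else 0)"
proof -
  interpret finite_product_prob_space "\<lambda>_. U" "{..<d}" by (rule torus_fpps)
  have "integral\<^sup>L (torus_measure d) (chi d n)
      = (\<integral>x. (\<Prod>k\<in>{..<d}. (\<lambda>k y. cis (of_int (n k) * y)) k (x k)) \<partial>Pi\<^sub>M {..<d} (\<lambda>_. U))"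
    unfolding torus_measure_def chi_def by (simp add: cis_sum)
  also have "\<dots> = (\<Prod>k\<in>{..<d}. integral\<^sup>L U (\<lambda>y. cis (of_int (n k) * y)))"
  proof (rule product_integral_prod)
    fix k
    show "integrable U (\<lambda>y. cis (of_int (n k) * y))"
      by (rule U_cis_int)
  qed auto
  also have "\<dots> = (\<Prod>k\<in>{..<d}. (if n k = 0 then 1 else 0))"
    by (simp add: int_cis_unif)
  also have "\<dots> = (if \<forall>k<d. n k = 0 then 1 else 0)"
    by (auto simp: prod_zero_iff)
  finally show ?thesis .
qed



definition nv :: "nat \<Rightarrow> nat \<Rightarrow> nat \<Rightarrow> nat \<Rightarrow> nat \<Rightarrow> int" where
  "nv T i t j = (\<lambda>k. (if k = j then int t - int T + 1 else 0) + (if k = i then int t - 1 else 0))"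

definition tg :: "nat \<Rightarrow> nat \<Rightarrow> nat \<Rightarrow> int" where
  "tg T i = (\<lambda>k. if k = i then int T else 0)"

lemma model_expand:
  "model d H A B P lam T i = (\<Sum>t=1..T. \<Sum>j<d. complex_of_real (P (T-1) t * Cmat H A B i j)
      * (lam j ^ (t-1) * cnj (lam j ^ (T-2)) * lam i ^ (t-1)))"
proof -
  let ?w = "\<lambda>t j. lam j ^ (t-1) * cnj (lam j ^ (T-2)) * lam i ^ (t-1)"
  have TT: "T - 1 - 1 = T - 2" by simp
  have "model d H A B P lam T i = (\<Sum>h<H. \<Sum>t=1..T. \<Sum>j<d.
      complex_of_real (P (T-1) t * (B h i * A h j)) * ?w t j)"
    unfolding model_def cinner_def evec_def TT
    by (intro sum.cong refl) (simp add: sum_distrib_left sum_distrib_right mult_ac)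
  also have "\<dots> = (\<Sum>t=1..T. \<Sum>j<d. \<Sum>h<H. complex_of_real (P (T-1) t * (B h i * A h j)) * ?w t j)"
    by (subst sum.swap) (simp add: sum.swap[of _ "{..<H}"])
  also have "\<dots> = (\<Sum>t=1..T. \<Sum>j<d. complex_of_real (P (T-1) t * Cmat H A B i j) * ?w t j)"
    by (intro sum.cong refl) (simp add: Cmat_def sum_distrib_left sum_distrib_right)
  finally show ?thesis .
qed

lemma nv_sum:
  assumes "i < d" "j < d"
  shows "(\<Sum>k<d. of_int (nv T i t j k) * \<phi> k) = (real_of_int (int t - int T + 1)) * \<phi> j + real_of_int (int t - 1) * \<phi> i"
proof -
  have "(\<Sum>k<d. of_int (nv T i t j k) * \<phi> k) = (\<Sum>k<d. (if k = j then real_of_int (int t - int T + 1) * \<phi> j else 0))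
        + (\<Sum>k<d. (if k = i then real_of_int (int t - 1) * \<phi> i else 0))"
    unfolding sum.distrib[symmetric] by (intro sum.cong refl) (auto simp: nv_def distrib_right)
  then show ?thesis using assms by simp
qed

lemma term_chi:
  assumes "i < d" "j < d" "t \<ge> 1" "T \<ge> 2"
  shows "cis (\<phi> j) ^ (t-1) * cnj (cis (\<phi> j) ^ (T-2)) * cis (\<phi> i) ^ (t-1) = chi d (nv T i t j) \<phi>"
proof -
  have "cis (\<phi> j) ^ (t-1) * cnj (cis (\<phi> j) ^ (T-2)) * cis (\<phi> i) ^ (t-1)
     = cis (real (t-1) * \<phi> j + (- (real (T-2) * \<phi> j)) + real (t-1) * \<phi> i)"
    by (simp only: complex_cnj_power cis_cnj Complex.DeMoivre cis_mult)
  also have "\<dots> = chi d (nv T i t j) \<phi>"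
    unfolding chi_def nv_sum[OF assms(1,2)] using assms
    by (simp add: of_nat_diff algebra_simps)
  finally show ?thesis .
qed

lemma tg_chi:
  assumes "i < d"
  shows "cis (\<phi> i) ^ T = chi d (tg T i) \<phi>"
proof -
  have "(\<Sum>k<d. of_int (tg T i k) * \<phi> k) = (\<Sum>k<d. if k = i then real T * \<phi> i else 0)"
    by (intro sum.cong refl) (auto simp: tg_def)
  then have "(\<Sum>k<d. of_int (tg T i k) * \<phi> k) = real T * \<phi> i" using assms by simp
  then show ?thesis by (simp only: chi_def Complex.DeMoivre)
qed

lemma chi_cnj_mult: "chi d n \<phi> * cnj (chi d m \<phi>) = chi d (\<lambda>k. n k - m k) \<phi>"
  by (simp add: chi_def cis_cnj cis_mult sum_subtractf[symmetric] algebra_simps)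



definition Ind :: "nat \<Rightarrow> (nat \<Rightarrow> int) \<Rightarrow> complex" where
  "Ind d n = (if \<forall>k<d. n k = 0 then 1 else 0)"

definition G :: "nat \<Rightarrow> nat \<Rightarrow> (nat \<Rightarrow> nat \<Rightarrow> real) \<Rightarrow> (nat \<Rightarrow> nat \<Rightarrow> real) \<Rightarrow> (nat \<Rightarrow> nat \<Rightarrow> real)
   \<Rightarrow> nat \<Rightarrow> nat \<Rightarrow> (nat \<Rightarrow> real) \<Rightarrow> complex" where
  "G d H A B P T i \<phi> = (\<Sum>t=1..T. \<Sum>j<d. complex_of_real (P (T-1) t * Cmat H A B i j) * chi d (nv T i t j) \<phi>)
      - chi d (tg T i) \<phi>"

lemma g_eq_G:
  assumes "i < d" "T \<ge> 2"
  shows "model d H A B P (\<lambda>j. cis (\<phi> j)) T i - evec (\<lambda>j. cis (\<phi> j)) (T+1) i = G d H A B P T i \<phi>"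
proof -
  have "model d H A B P (\<lambda>j. cis (\<phi> j)) T i = (\<Sum>t=1..T. \<Sum>j<d. complex_of_real (P (T-1) t * Cmat H A B i j) * chi d (nv T i t j) \<phi>)"
    unfolding model_expand using assms apply (intro sum.cong refl) apply (subst term_chi) by auto
  moreover have "evec (\<lambda>j. cis (\<phi> j)) (T+1) i = chi d (tg T i) \<phi>"
    using assms by (simp add: evec_def tg_chi)
  ultimately show ?thesis by (simp add: G_def)
qed

lemma G_meas[measurable]: "G d H A B P T i \<in> borel_measurable (torus_measure d)"
  unfolding G_def
  by (intro borel_measurable_diff borel_measurable_sum borel_measurable_times borel_measurable_const chi_meas)

definition Kb :: "nat \<Rightarrow> nat \<Rightarrow> (nat \<Rightarrow> nat \<Rightarrow> real) \<Rightarrow> (nat \<Rightarrow> nat \<Rightarrow> real) \<Rightarrow> (nat \<Rightarrow> nat \<Rightarrow> real)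
   \<Rightarrow> nat \<Rightarrow> nat \<Rightarrow> real" where
  "Kb d H A B P T i = (\<Sum>t=1..T. \<Sum>j<d. \<bar>P (T-1) t * Cmat H A B i j\<bar>) + 1"

lemma G_bound: "norm (G d H A B P T i \<phi>) \<le> Kb d H A B P T i"
proof -
  have "norm (G d H A B P T i \<phi>) \<le> norm (\<Sum>t=1..T. \<Sum>j<d. complex_of_real (P (T-1) t * Cmat H A B i j) * chi d (nv T i t j) \<phi>)
     + norm (chi d (tg T i) \<phi>)"
    unfolding G_def by (rule norm_triangle_ineq4)
  also have "norm (\<Sum>t=1..T. \<Sum>j<d. complex_of_real (P (T-1) t * Cmat H A B i j) * chi d (nv T i t j) \<phi>)
      \<le> (\<Sum>t=1..T. \<Sum>j<d. norm (complex_of_real (P (T-1) t * Cmat H A B i j) * chi d (nv T i t j) \<phi>))"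
    by (rule order_trans[OF norm_sum sum_mono]) (rule norm_sum)
  finally show ?thesis by (simp add: Kb_def norm_mult abs_mult)
qed

lemma G_AE:
  assumes loss: "loss d H Tmax A B P = 0" and T: "T \<in> {2..Tmax}" and i: "i < d"
  shows "AE \<phi> in torus_measure d. G d H A B P T i \<phi> = 0"
proof -
  interpret tp: prob_space "torus_measure d" by (rule torus_prob)
  define F where "F T \<phi> = (\<Sum>i<d. (cmod (G d H A B P T i \<phi>))\<^sup>2)" for T \<phi>
  have FE: "(let lam = (\<lambda>j. cis (\<phi> j)) in cnorm2 d (\<lambda>i. model d H A B P lam T i - evec lam (T + 1) i)) = F T \<phi>"
    if "T \<ge> 2" for T \<phi>
    unfolding Let_def cnorm2_def F_def
  proof (intro sum.cong refl)
    fix i assume "i \<in> {..<d}"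
    then show "(cmod (model d H A B P (\<lambda>j. cis (\<phi> j)) T i - evec (\<lambda>j. cis (\<phi> j)) (T + 1) i))\<^sup>2
      = (cmod (G d H A B P T i \<phi>))\<^sup>2" using g_eq_G[of i d T H A B P \<phi>] that by simp
  qed
  have Fint: "integrable (torus_measure d) (F T)" for T
    unfolding F_def
  proof (rule Bochner_Integration.integrable_sum)
    fix i
    show "integrable (torus_measure d) (\<lambda>\<phi>. (cmod (G d H A B P T i \<phi>))\<^sup>2)"
    proof (rule tp.integrable_const_bound[where B="(Kb d H A B P T i)\<^sup>2"])
      show "AE x in torus_measure d. norm ((cmod (G d H A B P T i x))\<^sup>2) \<le> (Kb d H A B P T i)\<^sup>2"
        using G_bound by (auto intro!: power_mono)
    qed measurable
  qed
  have Fnn: "0 \<le> F T \<phi>" for T \<phi> by (simp add: F_def sum_nonneg)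
  have "loss d H Tmax A B P = (\<Sum>T=2..Tmax. integral\<^sup>L (torus_measure d) (F T))"
    unfolding loss_def by (intro sum.cong refl Bochner_Integration.integral_cong) (rule FE; simp)
  then have "(\<Sum>T=2..Tmax. integral\<^sup>L (torus_measure d) (F T)) = 0" using loss by simp
  then have "integral\<^sup>L (torus_measure d) (F T) = 0"
    using T by (subst (asm) sum_nonneg_eq_0_iff) (auto intro!: Bochner_Integration.integral_nonneg Fnn)
  then have "AE \<phi> in torus_measure d. F T \<phi> = 0"
    using integral_nonneg_eq_0_iff_AE[OF Fint] Fnn by simp
  then show ?thesis
  proof (rule AE_mp, intro AE_I2 impI)
    fix \<phi> assume "F T \<phi> = 0"
    then have "\<forall>i\<in>{..<d}. (cmod (G d H A B P T i \<phi>))\<^sup>2 = 0"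
      unfolding F_def by (subst (asm) sum_nonneg_eq_0_iff) auto
    then show "G d H A B P T i \<phi> = 0" using i by simp
  qed
qed

lemma coef_eq:
  assumes ae: "AE \<phi> in torus_measure d. G d H A B P T i \<phi> = 0"
  shows "(\<Sum>t=1..T. \<Sum>j<d. complex_of_real (P (T-1) t * Cmat H A B i j) * Ind d (\<lambda>k. nv T i t j k - m k))
     - Ind d (\<lambda>k. tg T i k - m k) = 0"
proof -
  have "integral\<^sup>L (torus_measure d) (\<lambda>\<phi>. G d H A B P T i \<phi> * cnj (chi d m \<phi>))
      = integral\<^sup>L (torus_measure d) (\<lambda>\<phi>. 0)"
  proof (rule integral_cong_AE)
    show "(\<lambda>\<phi>. G d H A B P T i \<phi> * cnj (chi d m \<phi>)) \<in> borel_measurable (torus_measure d)"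
      by (intro borel_measurable_times G_meas borel_measurable_continuous_on[where f=cnj] chi_meas continuous_intros)
  qed (use ae in \<open>auto elim!: AE_mp\<close>)
  moreover have "integral\<^sup>L (torus_measure d) (\<lambda>\<phi>. G d H A B P T i \<phi> * cnj (chi d m \<phi>))
     = integral\<^sup>L (torus_measure d) (\<lambda>\<phi>. (\<Sum>t=1..T. \<Sum>j<d. complex_of_real (P (T-1) t * Cmat H A B i j)
           * chi d (\<lambda>k. nv T i t j k - m k) \<phi>) - chi d (\<lambda>k. tg T i k - m k) \<phi>)"
    unfolding G_def
    by (rule Bochner_Integration.integral_cong[OF refl]) (simp add: left_diff_distrib sum_distrib_right mult.assoc chi_cnj_mult)
  moreover have "\<dots> = (\<Sum>t=1..T. \<Sum>j<d. complex_of_real (P (T-1) t * Cmat H A B i j) * Ind d (\<lambda>k. nv T i t j k - m k))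
     - Ind d (\<lambda>k. tg T i k - m k)"
    by (simp add: integral_diff integral_sum chi_integrable int_chi Ind_def)
  ultimately show ?thesis by simp
qed



lemma Ind_zero: "i < d \<Longrightarrow> f i \<noteq> 0 \<Longrightarrow> Ind d f = 0"
  by (auto simp: Ind_def)

lemma Ind_one: "(\<And>k. k < d \<Longrightarrow> f k = 0) \<Longrightarrow> Ind d f = 1"
  by (auto simp: Ind_def)

lemma dsum:
  fixes f :: "nat \<Rightarrow> nat \<Rightarrow> 'a::comm_monoid_add"
  assumes "a \<in> {1..T}" "b < d" "\<And>t j. t \<in> {1..T} \<Longrightarrow> j < d \<Longrightarrow> f t j = (if t = a \<and> j = b then v else 0)"
  shows "(\<Sum>t=1..T. \<Sum>j<d. f t j) = v"
proof -
  have "(\<Sum>t=1..T. \<Sum>j<d. f t j) = (\<Sum>t=1..T. if t = a then (\<Sum>j<d. if j = b then v else 0) else 0)"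
    using assms(3) by (intro sum.cong refl) auto
  also have "\<dots> = v" using assms(1,2) by simp
  finally show ?thesis .
qed

lemma per_T:
  assumes loss: "loss d H Tmax A B P = 0" and T: "T \<in> {2..Tmax}"
  shows "(\<forall>i<d. P (T - 1) T * Cmat H A B i i = 1)
       \<and> (\<forall>i<d. \<forall>j<d. i \<noteq> j \<longrightarrow> Cmat H A B i j = 0)
       \<and> (\<forall>t\<in>{1..T-1}. d \<ge> 1 \<longrightarrow> P (T - 1) t = 0)"
proof -
  have T2: "T \<ge> 2" using T by simp
  have CE: "(\<Sum>t=1..T. \<Sum>j<d. complex_of_real (P (T-1) t * Cmat H A B i j) * Ind d (\<lambda>k. nv T i t j k - m k))
     - Ind d (\<lambda>k. tg T i k - m k) = 0" if "i < d" for i m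
    by (rule coef_eq[OF G_AE[OF loss T that]])
  have diag: "P (T - 1) T * Cmat H A B i i = 1" if i: "i < d" for i
  proof -
    have "(\<Sum>t=1..T. \<Sum>j<d. complex_of_real (P (T-1) t * Cmat H A B i j) * Ind d (\<lambda>k. nv T i t j k - tg T i k))
        = complex_of_real (P (T-1) T * Cmat H A B i i)"
    proof (rule dsum)
      fix t j assume t: "t \<in> {1..T}" and j: "j < d"
      show "complex_of_real (P (T-1) t * Cmat H A B i j) * Ind d (\<lambda>k. nv T i t j k - tg T i k)
          = (if t = T \<and> j = i then complex_of_real (P (T-1) T * Cmat H A B i i) else 0)"
      proof (cases "t = T \<and> j = i")
        case True
        then show ?thesis by (simp add: Ind_one nv_def tg_def)
      next
        case False
        have "nv T i t j i - tg T i i \<noteq> 0" using False t by (auto simp: nv_def tg_def)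
        then have "Ind d (\<lambda>k. nv T i t j k - tg T i k) = 0" by (rule Ind_zero[OF i])
        then show ?thesis using False by auto
      qed
    qed (use T2 i in auto)
    moreover have "Ind d (\<lambda>k. tg T i k - tg T i k) = 1" by (simp add: Ind_one)
    ultimately have "complex_of_real (P (T - 1) T) * complex_of_real (Cmat H A B i i) = 1"
      using CE[OF i, of "tg T i"] by simp
    then show ?thesis by (metis of_real_eq_1_iff of_real_mult)
  qed
  have Pnz: "P (T - 1) T \<noteq> 0" if "i < d" for i using diag[OF that] by auto
  have Cnz: "Cmat H A B i i \<noteq> 0" if "i < d" for i using diag[OF that] by auto
  have off: "Cmat H A B i j0 = 0" if i: "i < d" and j0: "j0 < d" "j0 \<noteq> i" for i j0
  proof -
    define m where "m = (\<lambda>k. (if k = j0 then 1 else 0) + (if k = i then int T - 1 else 0))"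
    have "(\<Sum>t=1..T. \<Sum>j<d. complex_of_real (P (T-1) t * Cmat H A B i j) * Ind d (\<lambda>k. nv T i t j k - m k))
        = complex_of_real (P (T-1) T * Cmat H A B i j0)"
    proof (rule dsum)
      fix t j assume t: "t \<in> {1..T}" and j: "j < d"
      show "complex_of_real (P (T-1) t * Cmat H A B i j) * Ind d (\<lambda>k. nv T i t j k - m k)
          = (if t = T \<and> j = j0 then complex_of_real (P (T-1) T * Cmat H A B i j0) else 0)"
      proof (cases "t = T \<and> j = j0")
        case True
        then show ?thesis using j0 by (simp add: Ind_one nv_def m_def)
      next
        case False
        show ?thesis
        proof (cases "j = j0")
          case True
          then have "nv T i t j j0 - m j0 \<noteq> 0" using False t j0 by (auto simp: nv_def m_def)
          then have "Ind d (\<lambda>k. nv T i t j k - m k) = 0" by (rule Ind_zero[OF j0(1)])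
          then show ?thesis using False by auto
        next
          case jne: False
          then have "nv T i t j j0 - m j0 \<noteq> 0" using j0 by (auto simp: nv_def m_def)
          then have "Ind d (\<lambda>k. nv T i t j k - m k) = 0" by (rule Ind_zero[OF j0(1)])
          then show ?thesis using False by auto
        qed
      qed
    qed (use T2 j0 in auto)
    moreover have "Ind d (\<lambda>k. tg T i k - m k) = 0"
      by (rule Ind_zero[OF j0(1)]) (use j0 in \<open>auto simp: tg_def m_def\<close>)
    ultimately have "P (T-1) T * Cmat H A B i j0 = 0" using CE[OF i, of m] by simp
    then show ?thesis using Pnz[OF i] by simp
  qed
  have Pz: "P (T - 1) t0 = 0" if t0: "t0 \<in> {1..T-1}" and d1: "d \<ge> 1" for t0
  proof -
    have i: "0 < d" using d1 by simp
    define m where "m = (\<lambda>k. if k = (0::nat) then 2 * int t0 - int T else 0)"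
    have "(\<Sum>t=1..T. \<Sum>j<d. complex_of_real (P (T-1) t * Cmat H A B 0 j) * Ind d (\<lambda>k. nv T 0 t j k - m k))
        = complex_of_real (P (T-1) t0 * Cmat H A B 0 0)"
    proof (rule dsum)
      fix t j assume t: "t \<in> {1..T}" and j: "j < d"
      show "complex_of_real (P (T-1) t * Cmat H A B 0 j) * Ind d (\<lambda>k. nv T 0 t j k - m k)
          = (if t = t0 \<and> j = 0 then complex_of_real (P (T-1) t0 * Cmat H A B 0 0) else 0)"
      proof (cases "j = 0")
        case False
        then show ?thesis using off[OF i j] by simp
      next
        case True
        show ?thesis
        proof (cases "t = t0")
          case tt: True
          then show ?thesis using True by (simp add: Ind_one nv_def m_def)
        next
          case False
          then have "nv T 0 t j 0 - m 0 \<noteq> 0" using True by (auto simp: nv_def m_def)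
          then have "Ind d (\<lambda>k. nv T 0 t j k - m k) = 0" by (rule Ind_zero[OF i])
          then show ?thesis using False by auto
        qed
      qed
    qed (use t0 i in auto)
    moreover have "Ind d (\<lambda>k. tg T 0 k - m k) = 0"
      by (rule Ind_zero[OF i]) (use t0 in \<open>auto simp: tg_def m_def\<close>)
    ultimately have "P (T-1) t0 * Cmat H A B 0 0 = 0" using CE[OF i, of m] by simp
    then show ?thesis using Cnz[OF i] by simp
  qed
  show ?thesis using diag off Pz by blast
qed

lemma final_eval:
  assumes diag: "\<forall>i<d. P (T - 1) T * Cmat H A B i i = 1"
    and off: "\<forall>i<d. \<forall>j<d. i \<noteq> j \<longrightarrow> Cmat H A B i j = 0"
    and Pz: "\<forall>t\<in>{1..T-1}. P (T - 1) t = 0"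
    and i: "i < d" and T: "T \<ge> 2"
  shows "model d H A B P lam T i = (cnj (evec lam (T - 1) i) * evec lam T i) * evec lam T i"
proof -
  have "model d H A B P lam T i = complex_of_real (P (T-1) T * Cmat H A B i i)
      * (lam i ^ (T-1) * cnj (lam i ^ (T-2)) * lam i ^ (T-1))"
    unfolding model_expand
  proof (rule dsum)
    fix t j assume t: "t \<in> {1..T}" and j: "j < d"
    show "complex_of_real (P (T-1) t * Cmat H A B i j) * (lam j ^ (t-1) * cnj (lam j ^ (T-2)) * lam i ^ (t-1))
      = (if t = T \<and> j = i then complex_of_real (P (T-1) T * Cmat H A B i i)
            * (lam i ^ (T-1) * cnj (lam i ^ (T-2)) * lam i ^ (T-1)) else 0)"
    proof (cases "t = T")
      case True then show ?thesis using off i j by auto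
    next
      case False then have "t \<in> {1..T-1}" using t by auto
      then show ?thesis using Pz False by auto
    qed
  qed (use T i in auto)
  also have "\<dots> = (cnj (evec lam (T - 1) i) * evec lam T i) * evec lam T i"
    using diag i by (simp add: evec_def mult_ac numeral_2_eq_2)
  finally show ?thesis .
qed

lemma unit_pow:
  assumes "cmod z = 1" "T \<ge> 2"
  shows "(cnj (z ^ (T-2)) * z ^ (T-1)) * z ^ (T-1) = z ^ T"
proof -
  have "z ^ (T-2) * cnj (z ^ (T-2)) = 1"
  proof -
    have "z * cnj z = 1" using assms complex_norm_square[of z] by simp
    then show ?thesis by (metis complex_cnj_power power_mult_distrib power_one)
  qed
  moreover have "z ^ (T-1) = z * z ^ (T-2)" using assms(2)
    by (metis Suc_diff_Suc Suc_1 diff_Suc_1 less_le_trans lessI power_Suc)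
  moreover have "z ^ T = z ^ (T-1) * z" using assms(2)
    by (metis Suc_diff_1 less_le_trans pos2 power_Suc2)
  ultimately show ?thesis by (simp add: algebra_simps)
qed



lemma rank_bound:
  fixes A B :: "nat \<Rightarrow> nat \<Rightarrow> real"
  assumes off: "\<forall>i<d. \<forall>j<d. i \<noteq> j \<longrightarrow> Cmat H A B i j = 0"
    and diag: "\<forall>i<d. Cmat H A B i i \<noteq> 0"
  shows "d \<le> H"
proof (rule ccontr)
  assume "\<not> d \<le> H"
  then have Hd: "H < d" by simp
  define M1 :: "real mat" where "M1 = mat d d (\<lambda>(i,h). if h < H then B h i else 0)"
  define M2 :: "real mat" where "M2 = mat d d (\<lambda>(h,j). if h < H then A h j else 0)"
  have M1c: "M1 \<in> carrier_mat d d" and M2c: "M2 \<in> carrier_mat d d"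
    by (auto simp: M1_def M2_def)
  have prod: "(M1 * M2) $$ (i,j) = Cmat H A B i j" if "i < d" "j < d" for i j
  proof -
    have "(M1 * M2) $$ (i,j) = (\<Sum>h\<in>{0..<d}. (if h < H then B h i else 0) * (if h < H then A h j else 0))"
      using that by (simp add: M1_def M2_def scalar_prod_def)
    also have "\<dots> = (\<Sum>h\<in>{0..<H}. B h i * A h j)"
      by (rule sum.mono_neutral_cong_right) (use Hd in auto)
    also have "\<dots> = Cmat H A B i j" by (simp add: Cmat_def atLeast0LessThan)
    finally show ?thesis .
  qed
  have MMc: "M1 * M2 \<in> carrier_mat d d" using M1c M2c by auto
  have ut: "upper_triangular (M1 * M2)"
    unfolding upper_triangular_def using MMc prod off by auto
  have "Determinant.det (M1 * M2) \<noteq> 0"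
    using upper_triangular_imp_det_eq_0_iff[OF MMc ut] MMc prod diag
    by (auto simp: diag_mat_def)
  moreover have "Determinant.det M1 = 0"
  proof -
    have "M1 *\<^sub>v unit_vec d H = 0\<^sub>v d"
    proof (rule eq_vecI)
      fix i assume "i < dim_vec (0\<^sub>v d :: real vec)"
      then have i: "i < d" by simp
      have "(M1 *\<^sub>v unit_vec d H) $ i = row M1 i \<bullet> unit_vec d H" using i M1c by simp
      also have "\<dots> = row M1 i $ H" using Hd by simp
      also have "\<dots> = 0" using i Hd by (simp add: M1_def)
      finally show "(M1 *\<^sub>v unit_vec d H) $ i = 0\<^sub>v d $ i" using i by simp
    qed (use M1c in simp)
    moreover have "unit_vec d H \<noteq> (0\<^sub>v d :: real vec)"
    proof
      assume "unit_vec d H = (0\<^sub>v d :: real vec)"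
      then have "unit_vec d H $ H = (0\<^sub>v d :: real vec) $ H" by simp
      then show False using Hd by simp
    qed
    ultimately show ?thesis
      using det_0_iff_vec_prod_zero_field[OF M1c] unit_vec_carrier[of d H] by blast
  qed
  ultimately show False using det_mult[OF M1c M2c] by simp
qed


theorem proposition3:
  fixes d H Tmax :: nat and A B P :: "nat \<Rightarrow> nat \<Rightarrow> real"
  assumes "d \<ge> 1" and "H \<ge> 1" and "Tmax \<ge> 2"
    and "loss d H Tmax A B P = 0"
  shows "(\<forall>T\<in>{2..Tmax}.
            (\<forall>t\<in>{1..T-1}. P (T - 1) t = 0)
          \<and> (\<forall>i<d. P (T - 1) T * Cmat H A B i i = 1)
          \<and> (\<forall>i<d. \<forall>j<d. i \<noteq> j \<longrightarrow> Cmat H A B i j = 0))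
       \<and> H \<ge> d
       \<and> (\<forall>lam. (\<forall>i<d. cmod (lam i) = 1) \<longrightarrow>
            (\<forall>T\<in>{2..Tmax}. \<forall>i<d.
               model d H A B P lam T i
                 = (cnj (evec lam (T - 1) i) * evec lam T i) * evec lam T i
             \<and> model d H A B P lam T i = lam i ^ T))"
proof -
  have PT: "(\<forall>i<d. P (T - 1) T * Cmat H A B i i = 1)
       \<and> (\<forall>i<d. \<forall>j<d. i \<noteq> j \<longrightarrow> Cmat H A B i j = 0)
       \<and> (\<forall>t\<in>{1..T-1}. P (T - 1) t = 0)" if T: "T \<in> {2..Tmax}" for T
    using per_T[OF assms(4) T] assms(1) by blast
  have part1: "\<forall>T\<in>{2..Tmax}.
            (\<forall>t\<in>{1..T-1}. P (T - 1) t = 0)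
          \<and> (\<forall>i<d. P (T - 1) T * Cmat H A B i i = 1)
          \<and> (\<forall>i<d. \<forall>j<d. i \<noteq> j \<longrightarrow> Cmat H A B i j = 0)"
    using PT by blast
  have T2: "2 \<in> {2..Tmax}" using assms(3) by simp
  have Hd: "H \<ge> d"
  proof (rule rank_bound)
    show "\<forall>i<d. \<forall>j<d. i \<noteq> j \<longrightarrow> Cmat H A B i j = 0" using PT[OF T2] by blast
    show "\<forall>i<d. Cmat H A B i i \<noteq> 0"
    proof (intro allI impI)
      fix i assume "i < d"
      then have "P (2 - 1) 2 * Cmat H A B i i = 1" using PT[OF T2] by blast
      then show "Cmat H A B i i \<noteq> 0" by auto
    qed
  qed
  have part3: "\<forall>lam. (\<forall>i<d. cmod (lam i) = 1) \<longrightarrow>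
            (\<forall>T\<in>{2..Tmax}. \<forall>i<d.
               model d H A B P lam T i
                 = (cnj (evec lam (T - 1) i) * evec lam T i) * evec lam T i
             \<and> model d H A B P lam T i = lam i ^ T)"
  proof (intro allI impI ballI conjI)
    fix lam :: "nat \<Rightarrow> complex" and T i
    assume u: "\<forall>i<d. cmod (lam i) = 1" and T: "T \<in> {2..Tmax}" and i: "i < d"
    have T2': "T \<ge> 2" using T by simp
    have PT': "(\<forall>i<d. P (T - 1) T * Cmat H A B i i = 1)" "(\<forall>i<d. \<forall>j<d. i \<noteq> j \<longrightarrow> Cmat H A B i j = 0)"
       "(\<forall>t\<in>{1..T-1}. P (T - 1) t = 0)" using PT[OF T] by blast+
    show eq1: "model d H A B P lam T i = (cnj (evec lam (T - 1) i) * evec lam T i) * evec lam T i"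
      using final_eval[of d P T H A B i lam] PT' i T2' by blast
    have "(cnj (evec lam (T - 1) i) * evec lam T i) * evec lam T i = lam i ^ T"
      using unit_pow[of "lam i" T] u i T2' by (simp add: evec_def numeral_2_eq_2)
    then show "model d H A B P lam T i = lam i ^ T" using eq1 by simp
  qed
  show ?thesis using part1 Hd part3 by blast
qed

end
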